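(* Let $n\geq 1$ and consider $2n$ qubits labeled $(-,i)$ and $(+,j)$ for $i,j\in\{1,\dots,n\}$, with Hilbert space $\mathcal{H}=(\mathbb{C}^2)^{\otimes 2n}$. For $i,j\in\{1,\dots,n\}$ let $|\psi_1\rangle^{ij}=\tfrac{1}{\sqrt2}(|00\rangle+|11\rangle)$, $|\psi_2\rangle^{ij}=\tfrac{1}{\sqrt2}(|01\rangle+|10\rangle)$, $|\psi_3\rangle^{ij}=\tfrac{1}{\sqrt2}(|00\rangle-|11\rangle)$, $|\psi_4\rangle^{ij}=\tfrac{1}{\sqrt2}(|01\rangle-|10\rangle)$, where the two tensor factors are the qubits $(-,i)$ and $(+,j)$, and let $E^{ij}_a=|\psi_a\rangle\langle\psi_a|^{ij}$ (acting as the identity on all other qubits), $a=1,\dots,4$. Then the algebra $\mathcal{D}$ generated by $\{E^{ij}_a : i,j=1,\dots,n;\ a=1,\dots,4\}$ contains no non-trivial local operator, i.e.\ no operator acting non-trivially on only a single qubit $(-,i)$ or $(+,j)$ (an operator of the form $A$ on that qubit tensored with the identity elsewhere, with $A$ not a multiple of the identity). *)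

theory Defs
  imports Complex_Main
begin

text \<open>Qubits are pairs (side, index): (False, i) is the qubit (-,i), (True, j) is (+,j),
  with indices in {1..n}. A computational basis state is a function from qubits to bool
  that is False outside the qubit set. Operators on the Hilbert space are given by their
  matrix (kernel) with respect to the computational basis, and vanish outside
  basis states.\<close>

type_synonym qubit = "bool \<times> nat"
type_synonym state = "qubit \<Rightarrow> bool"
type_synonym op = "state \<Rightarrow> state \<Rightarrow> complex"

definition qubits :: "nat \<Rightarrow> qubit set" where
  "qubits n = UNIV \<times> {1..n}"

definition basis :: "nat \<Rightarrow> state set" where
  "basis n = {s. \<forall>q. q \<notin> qubits n \<longrightarrow> s q = False}"

definition op_id :: "nat \<Rightarrow> op" where
  "op_id n = (\<lambda>s t. if s \<in> basis n \<and> s = t then 1 else 0)"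

definition op_mult :: "nat \<Rightarrow> op \<Rightarrow> op \<Rightarrow> op" where
  "op_mult n K L = (\<lambda>s t. \<Sum>u\<in>basis n. K s u * L u t)"

definition op_add :: "op \<Rightarrow> op \<Rightarrow> op" where
  "op_add K L = (\<lambda>s t. K s t + L s t)"

definition op_scale :: "complex \<Rightarrow> op \<Rightarrow> op" where
  "op_scale c K = (\<lambda>s t. c * K s t)"

inductive_set gen_algebra :: "nat \<Rightarrow> op set \<Rightarrow> op set" for n G where
  gen: "K \<in> G \<Longrightarrow> K \<in> gen_algebra n G"
| unit: "op_id n \<in> gen_algebra n G"
| add: "K \<in> gen_algebra n G \<Longrightarrow> L \<in> gen_algebra n G \<Longrightarrow> op_add K L \<in> gen_algebra n G"
| scale: "K \<in> gen_algebra n G \<Longrightarrow> op_scale c K \<in> gen_algebra n G"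
| mult: "K \<in> gen_algebra n G \<Longrightarrow> L \<in> gen_algebra n G \<Longrightarrow> op_mult n K L \<in> gen_algebra n G"

text \<open>The four Bell-type vectors psi_a, as amplitudes psi_a(x,y) of |xy>,
  x on the first factor (-,i), y on the second factor (+,j).\<close>
definition psi :: "nat \<Rightarrow> bool \<Rightarrow> bool \<Rightarrow> complex" where
  "psi a x y =
     (if a = 1 then (if x = y then 1 / sqrt 2 else 0)
      else if a = 2 then (if x \<noteq> y then 1 / sqrt 2 else 0)
      else if a = 3 then (if x = y then (if x then - 1 / sqrt 2 else 1 / sqrt 2) else 0)
      else (if x \<noteq> y then (if x then - 1 / sqrt 2 else 1 / sqrt 2) else 0))"

definition E :: "nat \<Rightarrow> nat \<Rightarrow> nat \<Rightarrow> nat \<Rightarrow> op" where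
  "E n i j a = (\<lambda>s t.
     if s \<in> basis n \<and> t \<in> basis n \<and>
        (\<forall>r. r \<noteq> (False, i) \<and> r \<noteq> (True, j) \<longrightarrow> s r = t r)
     then psi a (s (False, i)) (s (True, j)) * cnj (psi a (t (False, i)) (t (True, j)))
     else 0)"

definition gens :: "nat \<Rightarrow> op set" where
  "gens n = {E n i j a | i j a. i \<in> {1..n} \<and> j \<in> {1..n} \<and> a \<in> {1..4}}"

definition local_op :: "nat \<Rightarrow> qubit \<Rightarrow> (bool \<Rightarrow> bool \<Rightarrow> complex) \<Rightarrow> op" where
  "local_op n q A = (\<lambda>s t.
     if s \<in> basis n \<and> t \<in> basis n \<and> (\<forall>r. r \<noteq> q \<longrightarrow> s r = t r)
     then A (s q) (t q) else 0)"

definition scalar_2x2 :: "(bool \<Rightarrow> bool \<Rightarrow> complex) \<Rightarrow> bool" where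
  "scalar_2x2 A \<longleftrightarrow> (\<exists>c. \<forall>x y. A x y = (if x = y then c else 0))"

end

theory Submission
  imports Defs
begin

definition flip :: "nat \<Rightarrow> state \<Rightarrow> state" where
  "flip n s = (\<lambda>q. if q \<in> qubits n then \<not> s q else s q)"

definition zs :: "nat \<Rightarrow> state \<Rightarrow> int" where
  "zs n s = (\<Prod>q\<in>qubits n. if s q then -1 else 1)"

definition Inv :: "nat \<Rightarrow> op \<Rightarrow> bool" where
  "Inv n K \<longleftrightarrow> (\<forall>s t. K s t \<noteq> 0 \<longrightarrow> zs n s = zs n t) \<and>
     (\<forall>s t. K (flip n s) (flip n t) = K s t)"

lemma fin_q: "finite (qubits n)"
  by (simp add: qubits_def)

lemma flip_flip[simp]: "flip n (flip n s) = s"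
  by (auto simp: flip_def)

lemma flip_basis[simp]: "(flip n s \<in> basis n) = (s \<in> basis n)"
  by (auto simp: flip_def basis_def)

lemma flip_inj[simp]: "(flip n s = flip n t) = (s = t)"
  by (metis flip_flip)

lemma zs_pair:
  assumes "a \<in> qubits n" "b \<in> qubits n" "a \<noteq> b"
    "\<forall>r. r \<noteq> a \<and> r \<noteq> b \<longrightarrow> s r = t r" "(s a = s b) = (t a = t b)"
  shows "zs n s = zs n t"
proof -
  let ?g = "\<lambda>s q. if s q then -1 else (1::int)"
  have "\<And>s. zs n s = ?g s a * (?g s b * prod (?g s) (qubits n - {a} - {b}))"
    unfolding zs_def using assms(1-3) fin_q
    by (metis (no_types, lifting) Diff_iff finite_Diff insertE insert_Diff prod.remove)
  moreover have "prod (?g s) (qubits n - {a} - {b}) = prod (?g t) (qubits n - {a} - {b})"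
    using assms(4) by (intro prod.cong) auto
  ultimately show ?thesis using assms(5) by (cases "s a"; cases "s b"; cases "t a"; cases "t b") auto
qed

lemma psi_nz: "psi a x y \<noteq> 0 \<Longrightarrow> (x = y) = (a = 1 \<or> a = 3)"
  by (auto simp: psi_def split: if_splits)

lemma psi_flip: "psi a (\<not>x) (\<not>y) * cnj (psi a (\<not>x') (\<not>y')) = psi a x y * cnj (psi a x' y')"
  by (cases x; cases y; cases x'; cases y') (auto simp: psi_def)

lemma Inv_E:
  assumes "i \<in> {1..n}" "j \<in> {1..n}"
  shows "Inv n (E n i j a)"
  unfolding Inv_def
proof (intro conjI allI impI)
  fix s t assume nz: "E n i j a s t \<noteq> 0"
  then have st: "s \<in> basis n" "t \<in> basis n" "\<forall>r. r \<noteq> (False, i) \<and> r \<noteq> (True, j) \<longrightarrow> s r = t r"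
    and p: "psi a (s (False, i)) (s (True, j)) \<noteq> 0" "psi a (t (False, i)) (t (True, j)) \<noteq> 0"
    by (auto simp: E_def split: if_splits)
  show "zs n s = zs n t"
    apply (rule zs_pair[OF _ _ _ st(3)])
    using assms psi_nz[OF p(1)] psi_nz[OF p(2)] by (auto simp: qubits_def)
next
  fix s t
  have q: "(False, i) \<in> qubits n" "(True, j) \<in> qubits n" using assms by (auto simp: qubits_def)
  have ag: "(\<forall>r. r \<noteq> (False, i) \<and> r \<noteq> (True, j) \<longrightarrow> flip n s r = flip n t r)
      = (\<forall>r. r \<noteq> (False, i) \<and> r \<noteq> (True, j) \<longrightarrow> s r = t r)"
    by (auto simp: flip_def)
  have v: "flip n s (False, i) = (\<not> s (False, i))" "flip n s (True, j) = (\<not> s (True, j))"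
      "flip n t (False, i) = (\<not> t (False, i))" "flip n t (True, j) = (\<not> t (True, j))"
      using q by (auto simp: flip_def)
  show "E n i j a (flip n s) (flip n t) = E n i j a s t"
    unfolding E_def ag flip_basis v psi_flip ..
qed

lemma Inv_id: "Inv n (op_id n)"
  by (auto simp: Inv_def op_id_def)

lemma Inv_alg: "K \<in> gen_algebra n (gens n) \<Longrightarrow> Inv n K"
proof (induction rule: gen_algebra.induct)
  case (gen K) then show ?case by (auto simp: gens_def intro: Inv_E)
next
  case unit then show ?case by (rule Inv_id)
next
  case (add K L)
  show ?case unfolding Inv_def
  proof (intro conjI allI impI)
    fix s t assume "op_add K L s t \<noteq> 0"
    then have "K s t \<noteq> 0 \<or> L s t \<noteq> 0" by (auto simp: op_add_def)
    then show "zs n s = zs n t" using add.IH unfolding Inv_def by blast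
  next
    fix s t show "op_add K L (flip n s) (flip n t) = op_add K L s t"
      using add.IH unfolding Inv_def op_add_def by simp
  qed
next
  case (scale K c) then show ?case by (auto simp: Inv_def op_scale_def)
next
  case (mult K L)
  show ?case unfolding Inv_def
  proof (intro conjI allI impI)
    fix s t assume "op_mult n K L s t \<noteq> 0"
    then obtain u where "K s u * L u t \<noteq> 0" unfolding op_mult_def
      using sum.neutral[of "basis n" "\<lambda>u. K s u * L u t"] by blast
    then show "zs n s = zs n t" using mult.IH unfolding Inv_def by auto
  next
    fix s t
    have "op_mult n K L (flip n s) (flip n t) = (\<Sum>u\<in>basis n. K (flip n s) (flip n u) * L (flip n u) (flip n t))"
      unfolding op_mult_def
      by (rule sum.reindex_bij_witness[of _ "flip n" "flip n"]) simp_all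
    also have "\<dots> = op_mult n K L s t" using mult.IH unfolding Inv_def op_mult_def by simp
    finally show "op_mult n K L (flip n s) (flip n t) = op_mult n K L s t" .
  qed
qed

lemma zs_zero: "zs n (\<lambda>_. False) = 1"
  by (simp add: zs_def)

lemma zs_one: "q \<in> qubits n \<Longrightarrow> zs n ((\<lambda>_. False)(q := True)) = -1"
  unfolding zs_def using fin_q
  by (subst prod.remove[of _ q]) auto

theorem lemma4:
  fixes n :: nat
  assumes "n \<ge> 1"
  shows "\<forall>q \<in> qubits n. \<forall>A. \<not> scalar_2x2 A \<longrightarrow> local_op n q A \<notin> gen_algebra n (gens n)"
proof (intro ballI allI impI notI)
  fix q A
  assume q: "q \<in> qubits n" and ns: "\<not> scalar_2x2 A" and m: "local_op n q A \<in> gen_algebra n (gens n)"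
  have I: "Inv n (local_op n q A)" using Inv_alg[OF m] .
  let ?s = "\<lambda>_::qubit. False"
  let ?t = "?s(q := True)"
  have b: "?s \<in> basis n" "?t \<in> basis n" using q by (auto simp: basis_def)
  have z: "zs n ?s \<noteq> zs n ?t" using zs_zero zs_one[OF q] by simp
  have a1: "A False True = 0"
  proof (rule ccontr)
    assume "A False True \<noteq> 0"
    then have "local_op n q A ?s ?t \<noteq> 0" using b by (simp add: local_op_def)
    then show False using I z unfolding Inv_def by blast
  qed
  have a2: "A True False = 0"
  proof (rule ccontr)
    assume "A True False \<noteq> 0"
    then have "local_op n q A ?t ?s \<noteq> 0" using b by (simp add: local_op_def)
    then show False using I z unfolding Inv_def by metis
  qed
  have a3: "A True True = A False False"
  proof -
    have "local_op n q A (flip n ?s) (flip n ?s) = local_op n q A ?s ?s"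
      using I unfolding Inv_def by blast
    moreover have "flip n ?s \<in> basis n" using b(1) by (simp only: flip_basis)
    moreover have "flip n ?s q = True" using q by (simp add: flip_def)
    ultimately show ?thesis using b q by (simp add: local_op_def)
  qed
  have "scalar_2x2 A" unfolding scalar_2x2_def
  proof (intro exI[of _ "A False False"] allI)
    fix x y show "A x y = (if x = y then A False False else 0)"
      using a1 a2 a3 by (cases x; cases y) simp_all
  qed
  with ns show False by simp
qed

end
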